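(* Let $x,y\ge 0$ not both zero, and $z,p>0$ (the approximation is intended for the regime $x,y\ll z,p$). Let $a=(x+y)/2$ and $g=\sqrt{xy}$. Then $$R_J(x,y,z,p)=\frac{3}{2\sqrt z\,p}\left[\ln\frac{8z}{a+g}-2R_C\!\left(1,\frac pz\right)+\frac\theta p\ln\frac{2p}{a+g}\right],$$ where $\frac{g}{1-g/p}<\theta<\frac{a}{1-a/p}\left(1+\frac{p}{2z}\right)$.
   Context: For $x,y,z\ge 0$ with at most one zero and $p>0$: $R_J(x,y,z,p)=\frac32\int_0^\infty[(t+x)(t+y)(t+z)]^{-1/2}(t+p)^{-1}\,dt$. For $x\ge0$, $y>0$: $R_C(x,y)=\frac12\int_0^\infty(t+x)^{-1/2}(t+y)^{-1}\,dt$.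
   Formalization: The approximation is asserted under the added hypothesis a < p, that is (x+y)/2 < p, and no other smallness of x, y relative to z or p is assumed. Apart from conventions, each condition added here is assumed in the paper as well or is needed for the statement above to hold. *)

theory Defs
  imports "HOL-Analysis.Analysis"
begin

text \<open>Carlson's symmetric elliptic integrals, as improper (Henstock-Kurzweil)
integrals over [0, infinity). The integrands are nonnegative, so this agrees with
the Lebesgue integral whenever the integral converges.\<close>

definition R_J :: "real \<Rightarrow> real \<Rightarrow> real \<Rightarrow> real \<Rightarrow> real" where
  "R_J x y z p = 3 / 2 * integral {0..}
     (\<lambda>t. 1 / (sqrt ((t + x) * (t + y) * (t + z)) * (t + p)))"

definition R_C :: "real \<Rightarrow> real \<Rightarrow> real" where
  "R_C x y = 1 / 2 * integral {0..} (\<lambda>t. 1 / (sqrt (t + x) * (t + y)))"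

end

theory Submission
  imports Defs "HOL-Real_Asymp.Real_Asymp"
begin


lemma ftc_inf:
  fixes F f :: "real \<Rightarrow> real"
  assumes cont: "\<And>d. d \<ge> a \<Longrightarrow> continuous_on {a..d} F"
    and der: "\<And>t. t > a \<Longrightarrow> (F has_real_derivative f t) (at t)"
    and lim: "(F \<longlongrightarrow> L) at_top"
  shows "(f has_integral (L - F a)) {a..}"
proof -
  have fi: "(f has_integral (F d - F a)) {a..d}" if "a \<le> d" for d
  proof (rule fundamental_theorem_of_calculus_interior[OF that])
    show "continuous_on {a..d} F" using cont that .
    fix x assume "x \<in> {a<..<d}"
    then show "(F has_vector_derivative f x) (at x)"
      using der[of x] by (simp add: has_real_derivative_iff_has_vector_derivative)
  qed
  show ?thesis
    unfolding has_integral_alt'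
  proof (intro conjI allI impI)
    fix c d :: real
    have "f integrable_on {a..max a d}" using fi[of "max a d"] by auto
    then have "f integrable_on {max a c..d}"
      by (rule integrable_subinterval_real) auto
    moreover have "{a..} \<inter> cbox c d = {max a c..d}" by auto
    ultimately show "(\<lambda>x. if x \<in> {a..} then f x else 0) integrable_on cbox c d"
      using integrable_restrict_Int[of "{a..}" f "cbox c d"] by simp
  next
    fix e :: real assume "e > 0"
    from lim[unfolded tendsto_iff, rule_format, OF this]
    obtain B0 where B0: "\<And>T. T \<ge> B0 \<Longrightarrow> dist (F T) L < e"
      by (auto simp: eventually_at_top_linorder)
    define M where "M = max B0 \<bar>a\<bar>"
    show "\<exists>B>0. \<forall>c d. ball 0 B \<subseteq> cbox c d \<longrightarrow>
            norm (integral (cbox c d) (\<lambda>x. if x \<in> {a..} then f x else 0) - (L - F a)) < e"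
    proof (intro exI[of _ "M+1"] conjI allI impI)
      show "M + 1 > 0" by (simp add: M_def)
      fix c d :: real assume sub: "ball 0 (M+1) \<subseteq> cbox c d"
      have "-M \<in> ball 0 (M+1)" "M \<in> ball 0 (M+1)" by (auto simp: M_def)
      then have "-M \<in> cbox c d" "M \<in> cbox c d" using sub by blast+
      then have cd: "c \<le> -M" "M \<le> d" by auto
      then have "{a..} \<inter> cbox c d = {a..d}" by (auto simp: M_def)
      then have "integral (cbox c d) (\<lambda>x. if x \<in> {a..} then f x else 0) = F d - F a"
      proof -
        have "a \<le> d" using cd by (auto simp: M_def)
        then have "integral {a..d} f = F d - F a" using fi[of d] by (simp add: integral_unique)
        moreover have "max a c = a" using cd \<open>a \<le> d\<close> by (auto simp: M_def)
        ultimately show ?thesis using integral_restrict_Int[of "cbox c d" "{a..}" f]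
          by simp
      qed
      moreover have "dist (F d) L < e" using B0 cd by (simp add: M_def)
      ultimately show "norm (integral (cbox c d) (\<lambda>x. if x \<in> {a..} then f x else 0) - (L - F a)) < e"
        by (simp add: dist_real_def)
    qed
  qed
qed

lemma tail_lim:
  fixes f :: "real \<Rightarrow> real"
  assumes "f integrable_on {a..}"
  shows "((\<lambda>T. integral {a..T} f) \<longlongrightarrow> integral {a..} f) at_top"
proof -
  have H: "(f has_integral integral {a..} f) {a..}" using assms by auto
  show ?thesis
  proof (rule tendstoI)
    fix e :: real assume "e > 0"
    from H[unfolded has_integral_alt', THEN conjunct2, rule_format, OF this]
    obtain B where B: "B > 0" "\<And>c d. ball 0 B \<subseteq> cbox c d \<Longrightarrow>
        norm (integral (cbox c d) (\<lambda>x. if x \<in> {a..} then f x else 0) - integral {a..} f) < e"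
      by blast
    define M where "M = max B \<bar>a\<bar>"
    show "\<forall>\<^sub>F T in at_top. dist (integral {a..T} f) (integral {a..} f) < e"
      unfolding eventually_at_top_linorder
    proof (intro exI[of _ M] allI impI)
      fix T assume T: "T \<ge> M"
      have "ball 0 B \<subseteq> cbox (-M) T" using T by (auto simp: M_def)
      note B(2)[OF this]
      moreover have "{a..} \<inter> cbox (-M) T = {a..T}" by (auto simp: M_def)
      moreover have "max a (-M) = a" by (simp add: M_def)
      ultimately show "dist (integral {a..T} f) (integral {a..} f) < e"
        using integral_restrict_Int[of "cbox (-M) T" "{a..}" f] by (simp add: dist_real_def)
    qed
  qed
qed


lemma ident:
  fixes w r Sv t p a :: real
  assumes "w>0" "r>0" "Sv>0" "t>0" "p>0" "t+a>0" "w*w = t + r*r"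
  shows "1/(Sv*w*(t+p)) + 1/(w*(t+p))/p + (1/r)*(1/(w*(w+r)) - 1/(t+a))/p
       = (1/t - 1/Sv)*(1/(r*p) - 1/(w*(t+p))) + 1/(r*p)*(1/Sv - 1/(t+a))"
proof -
  have wr: "w + r > 0" using assms by simp
  have poly: "r*t*(w+r) + t*(t+p) = (w+r)*(w*(t+p) - r*p)"
  proof -
    have t: "t = w*w - r*r" using assms(7) by simp
    show ?thesis unfolding t by (simp add: algebra_simps)
  qed
  define M where "M = r*p*t*w*(w+r)*(t+p)"
  have nz: "t+p \<noteq> 0" "w+r \<noteq> 0" "w \<noteq> 0" "r \<noteq> 0" "p \<noteq> 0" "t \<noteq> 0" using assms wr by auto
  have M0: "M \<noteq> 0" using assms wr by (simp add: M_def)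
  have m1: "1/(w*(t+p))/p * M = r*t*(w+r)" using nz unfolding M_def by (simp add: divide_simps)
  have m2: "(1/r)*(1/(w*(w+r)))/p * M = t*(t+p)" using nz unfolding M_def by (simp add: divide_simps)
  have m3: "1/(r*p*t) * M = w*(w+r)*(t+p)" using nz unfolding M_def by (simp add: divide_simps)
  have m4: "1/(w*(t+p)*t) * M = r*p*(w+r)" using nz unfolding M_def by (simp add: divide_simps)
  have e: "1/(w*(t+p))/p + (1/r)*(1/(w*(w+r)))/p = 1/(r*p*t) - 1/(w*(t+p)*t)"
  proof -
    have "(1/(w*(t+p))/p + (1/r)*(1/(w*(w+r)))/p) * M = (1/(r*p*t) - 1/(w*(t+p)*t)) * M"
      unfolding distrib_right left_diff_distrib m1 m2 m3 m4 using poly by (simp add: algebra_simps)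
    then show ?thesis using M0 by simp
  qed
  have "1/(Sv*w*(t+p)) + 1/(w*(t+p))/p + (1/r)*(1/(w*(w+r)) - 1/(t+a))/p
     = 1/(Sv*w*(t+p)) + (1/(w*(t+p))/p + (1/r)*(1/(w*(w+r)))/p) - 1/(r*p*(t+a))"
  proof -
    have h: "(1/r)*(1/(t+a))/p = 1/(r*p*(t+a))" by simp
    show ?thesis using h by (simp only: right_diff_distrib diff_divide_distrib)
  qed
  also have "\<dots> = 1/(Sv*w*(t+p)) + 1/(r*p*t) - 1/(w*(t+p)*t) - 1/(r*p*(t+a))"
    unfolding e by simp
  also have "\<dots> = (1/t - 1/Sv)*(1/(r*p) - 1/(w*(t+p))) + 1/(r*p)*(1/Sv - 1/(t+a))"
  proof -
    define c where "c = 1/(r*p)"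
    define d where "d = 1/(w*(t+p))"
    define e where "e = 1/(t+a)"
    have "1/(Sv*w*(t+p)) = d/Sv" "1/(r*p*t) = c/t" "1/(w*(t+p)*t) = d/t" "1/(r*p*(t+a)) = c*e"
      by (simp_all add: c_def d_def e_def)
    moreover have "(1/t - 1/Sv)*(c - d) + c*(1/Sv - e) = d/Sv + c/t - d/t - c*e"
      by (simp add: algebra_simps diff_divide_distrib)
    ultimately show ?thesis by (simp add: c_def d_def e_def)
  qed
  finally show ?thesis .
qed

lemma upper_pt:
  fixes w r t z p :: real
  assumes "w>0" "r>0" "t>0" "p>0" "w*w = t + z" "r*r = z"
  shows "1/(r*p) - 1/(w*(t+p)) < (1/r)*(t/(t+p))*(1/p + 1/(2*z))"
proof -
  have z: "z > 0" using assms by (metis mult_pos_pos)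
  have key: "(1 - t/(2*z)) * w < r"
  proof (cases "t \<ge> 2*z")
    case True
    then have "1 - t/(2*z) \<le> 0" using z by (simp add: field_simps)
    then have "(1 - t/(2*z)) * w \<le> 0" using assms(1) by (simp add: mult_nonpos_nonneg)
    then show ?thesis using assms(2) by linarith
  next
    case False
    then have h: "1 - t/(2*z) > 0" using z by (simp add: field_simps)
    define u where "u = t/z"
    have u: "u > 0" "u < 2" "t = u*z" using assms z False by (auto simp: u_def field_simps)
    have "((1 - t/(2*z)) * w)^2 = (1 - u/2)^2 * (z*(1+u))"
      using assms u z by (simp add: power2_eq_square algebra_simps)
    also have "\<dots> = z * (1 - 3*u^2/4 + u^3/4)"
      by (simp add: field_simps power2_eq_square power3_eq_cube)
    also have "\<dots> < z * 1"
    proof (rule mult_strict_left_mono[OF _ z])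
      have "u^2 * (3 - u) > 0" using u by simp
      then show "1 - 3*u^2/4 + u^3/4 < 1" by (simp add: algebra_simps power3_eq_cube power2_eq_square)
    qed
    also have "\<dots> = r^2" using assms by (simp add: power2_eq_square)
    finally have "((1 - t/(2*z)) * w)^2 < r^2" .
    then show ?thesis using assms(2) by (meson abs_le_square_iff abs_of_pos less_le_not_le not_le power_less_imp_less_base)
  qed
  have gen: "1/(r*p) - (1/r)*((q-p)/q)*(1/p + 1/(2*z)) = (1 - (q-p)/(2*z)) / (r*q)" if "q > 0" for q
    using assms z that by (simp add: field_simps)
  have "1/(r*p) - (1/r)*(t/(t+p))*(1/p + 1/(2*z)) = (1 - t/(2*z)) / (r*(t+p))"
    using gen[of "t+p"] assms by simp
  also have "\<dots> < 1/(w*(t+p))"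
  proof -
    have "(1 - t/(2*z)) / (r*(t+p)) = ((1 - t/(2*z)) * w) / (r*w*(t+p))" using assms by simp
    also have "\<dots> < r / (r*w*(t+p))"
      using key assms by (intro divide_strict_right_mono) auto
    also have "\<dots> = 1/(w*(t+p))" using assms by simp
    finally show ?thesis .
  qed
  finally show ?thesis by simp
qed

lemma spike0:
  fixes f :: "real \<Rightarrow> real"
  shows "(f has_integral I) {0<..} \<longleftrightarrow> (f has_integral I) {0..}"
  by (rule has_integral_spike_set_eq; rule negligible_subset[of "{0}"]) auto

lemma pos_int:
  fixes h :: "real \<Rightarrow> real"
  assumes "(h has_integral I) {0<..}" "\<And>t. t>0 \<Longrightarrow> h t > 0" "continuous_on {1..2} h"
  shows "I > 0"
proof -
  have "integral {1..2::real} (\<lambda>_. 0::real) < integral {1..2} h"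
    by (rule integral_less_real) (use assms in auto)
  then have "0 < integral {1..2} h" by simp
  also have "integral {1..2} h \<le> integral {0<..} h"
    by (rule integral_subset_le) (use assms integrable_continuous_interval in \<open>auto simp: less_imp_le\<close>)
  also have "\<dots> = I" using assms(1) by (rule integral_unique)
  finally show ?thesis .
qed

theorem mainTheorem12:
  fixes x y z p :: real
  assumes "x \<ge> 0" and "y \<ge> 0" and "x \<noteq> 0 \<or> y \<noteq> 0"
    and "z > 0" and "p > 0"
    and "(x + y) / 2 < p"
  shows "\<exists>\<theta>::real.
           sqrt (x * y) / (1 - sqrt (x * y) / p) < \<theta> \<and>
           \<theta> < ((x + y) / 2) / (1 - ((x + y) / 2) / p) * (1 + p / (2 * z)) \<and>
           R_J x y z p = 3 / (2 * sqrt z * p) *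
             (ln (8 * z / ((x + y) / 2 + sqrt (x * y))) - 2 * R_C 1 (p / z)
              + \<theta> / p * ln (2 * p / ((x + y) / 2 + sqrt (x * y))))"
proof -
  define a where "a = (x+y)/2"
  define g where "g = sqrt (x*y)"
  define r where "r = sqrt z"
  have a_pos: "a > 0" using assms by (auto simp: a_def)
  have a_lt: "a < p" using assms by (simp add: a_def)
  have xy0: "x*y \<ge> 0" using assms by simp
  have g0: "g \<ge> 0" using xy0 by (simp add: g_def)
  have gg: "g^2 = x*y" using xy0 by (simp add: g_def)
  have xya: "x*y \<le> a^2"
  proof -
    have "0 \<le> (x-y)^2" by simp
    then show ?thesis by (simp add: a_def power2_eq_square algebra_simps)
  qed
  have g_le: "g \<le> a" unfolding g_def using xya a_pos by (intro real_le_lsqrt) auto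
  have r_pos: "r > 0" using assms by (simp add: r_def)
  have rr: "r*r = z" using assms by (simp add: r_def)
  have ag_pos: "a + g > 0" using a_pos g0 by simp
  have Lg_pos: "ln (2*p/(a+g)) > 0"
    using a_lt g_le ag_pos by (intro ln_gt_zero) (simp add: field_simps)
  have sqxy: "sqrt x + sqrt y > 0" using assms by (auto simp: add_pos_nonneg add_nonneg_pos)
  have sq2: "(sqrt x + sqrt y)^2 = 2*(a+g)"
    using assms by (simp add: power2_eq_square algebra_simps a_def g_def real_sqrt_mult)
  have Sge: "sqrt ((t+x)*(t+y)) \<ge> t + g" if "t > 0" for t
  proof (rule real_le_rsqrt)
    have "2*g \<le> x + y" using g_le by (simp add: a_def)
    then have "t*(2*g) \<le> t*(x+y)" using that by (intro mult_left_mono) auto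
    then show "(t+g)^2 \<le> (t+x)*(t+y)" using gg by (simp add: power2_eq_square algebra_simps)
  qed
  have Sle: "sqrt ((t+x)*(t+y)) \<le> t + a" if "t > 0" for t
    using that a_pos xya by (intro real_le_lsqrt) (auto simp: power2_eq_square algebra_simps a_def)
  have Sgt: "sqrt ((t+x)*(t+y)) > t" if "t > 0" for t
  proof (rule real_less_rsqrt)
    have "t*(x+y) > 0" using that a_pos by (simp add: a_def)
    then show "t^2 < (t+x)*(t+y)" using xy0 by (simp add: power2_eq_square algebra_simps)
  qed
  define S where "S = (\<lambda>t::real. sqrt ((t+x)*(t+y)))"
  define c0 where "c0 = 1/(r*p)"
  define f1 where "f1 = (\<lambda>t::real. 1 / (sqrt ((t + x) * (t + y) * (t + z)) * (t + p)))"
  define phi where "phi = (\<lambda>t::real. 1/(sqrt(t+z)*(t+p)))"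
  define C where "C = (\<lambda>t. (1/t - 1/S t)*(c0 - phi t))"
  define Q where "Q = (\<lambda>t. c0*(1/S t - 1/(t+a)))"
  define W where "W = (\<lambda>t. (1/r)*(1/(sqrt(t+z)*(sqrt(t+z)+r)) - 1/(t+a)))"
  define Lg where "Lg = ln (2*p/(a+g))"
  have Spos: "S t > 0" if "t > 0" for t using Sgt[OF that] that unfolding S_def by linarith
  have ident_t: "f1 t + phi t / p + W t / p = C t + Q t" if t: "t > 0" for t
  proof -
    have w: "sqrt (t+z) > 0" "sqrt(t+z) * sqrt(t+z) = t + r*r" using t assms rr by auto
    have "f1 t = 1/(S t * sqrt(t+z) * (t+p))"
      unfolding f1_def S_def using t assms by (simp add: real_sqrt_mult)
    then show ?thesis
      unfolding phi_def W_def C_def Q_def c0_def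
      using ident[OF w(1) r_pos Spos[OF t] t assms(5) _ w(2)] t a_pos by simp
  qed
  have sp: "sqrt(t+x)+sqrt(t+y) > 0" if "t \<ge> 0" for t
  proof -
    have "sqrt (t+x) \<ge> sqrt x" "sqrt (t+y) \<ge> sqrt y" using that by auto
    then show ?thesis using sqxy by linarith
  qed
  define QA where "QA = (\<lambda>t. c0*(2*ln(sqrt(t+x)+sqrt(t+y)) - ln(t+a)))"
  have QI: "(Q has_integral (c0*(2*ln 2) - QA 0)) {0..}"
  proof (rule ftc_inf)
    fix d :: real
    show "continuous_on {0..d} QA" unfolding QA_def
      using sp a_pos assms(1,2)
      by (intro continuous_intros) (auto simp: add_pos_nonneg less_imp_neq[symmetric])
  next
    fix t :: real assume t: "t > 0"
    have sx: "sqrt (t+x) > 0" "sqrt (t+y) > 0" using t assms(1,2) by auto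
    have "(QA has_real_derivative c0*(2*((inverse (sqrt(t+x))/2 + inverse(sqrt(t+y))/2)/(sqrt(t+x)+sqrt(t+y))) - 1/(t+a))) (at t)"
      unfolding QA_def using sx t a_pos sp[of t]
      by (auto intro!: derivative_eq_intros simp: divide_simps)
    moreover have "c0*(2*((inverse (sqrt(t+x))/2 + inverse(sqrt(t+y))/2)/(sqrt(t+x)+sqrt(t+y))) - 1/(t+a)) = Q t"
    proof -
      have gen: "2*((inverse u1/2 + inverse v1/2)/(u1+v1)) = 1/(u1 * v1)" if "u1>0" "v1>0" for u1 v1 :: real
      proof -
        have n: "u1 + v1 \<noteq> 0" using that by simp
        have "inverse u1/2 + inverse v1/2 = (u1+v1)/(2*(u1 * v1))" using that by (simp add: field_simps)
        then show ?thesis using n by simp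
      qed
      show ?thesis unfolding Q_def S_def real_sqrt_mult gen[OF sx] by simp
    qed
    ultimately show "(QA has_real_derivative Q t) (at t)" by simp
  next
    show "(QA \<longlongrightarrow> c0*(2*ln 2)) at_top" unfolding QA_def a_def
      by (intro tendsto_mult_left) real_asymp
  qed
  have fd: "1/q1 - 1/q2 = (q2 - q1)/(q1*q2)" if "q1 > 0" "q2 > 0" for q1 q2 :: real
    using that by (simp add: field_simps)
  define V where "V = (\<lambda>t. (1/r)*(2*ln(sqrt(t+z)+r) - ln(t+a)))"
  have WI: "(W has_integral (0 - V 0)) {0..}"
  proof (rule ftc_inf)
    fix d :: real
    show "continuous_on {0..d} V" unfolding V_def
      using r_pos a_pos assms(4)
      by (intro continuous_intros) (auto simp: add_pos_nonneg less_imp_neq[symmetric])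
  next
    fix t :: real assume t: "t > 0"
    have sx: "sqrt (t+z) > 0" using t assms(4) by auto
    have "(V has_real_derivative (1/r)*(2*((inverse (sqrt(t+z))/2)/(sqrt(t+z)+r)) - 1/(t+a))) (at t)"
      unfolding V_def using sx t a_pos r_pos
      by (auto intro!: derivative_eq_intros simp: add_pos_pos less_imp_neq[symmetric] mult.commute)
    moreover have "(1/r)*(2*((inverse (sqrt(t+z))/2)/(sqrt(t+z)+r)) - 1/(t+a)) = W t"
      unfolding W_def by (simp add: divide_simps)
    ultimately show "(V has_real_derivative W t) (at t)" by simp
  next
    have "((\<lambda>t. 2*ln(sqrt(t+z)+r) - ln(t+a)) \<longlongrightarrow> 0) at_top" unfolding r_def by real_asymp
    from tendsto_mult_left[OF this, of "1/r"]
    show "(V \<longlongrightarrow> 0) at_top" unfolding V_def by simp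
  qed
  define K where "K = a*(1/p + 1/(2*z))/r"
  define Uf where "Uf = (\<lambda>t. K/((t+a)*(t+p)))"
  define UA where "UA = (\<lambda>t. K/(p-a)*(ln(t+a) - ln(t+p)))"
  have UI: "(Uf has_integral (0 - UA 0)) {0..}"
  proof (rule ftc_inf)
    fix d :: real
    show "continuous_on {0..d} UA" unfolding UA_def
      using a_pos assms(5)
      by (intro continuous_intros) (auto simp: add_pos_nonneg less_imp_neq[symmetric])
  next
    fix t :: real assume t: "t > 0"
    have "(UA has_real_derivative K/(p-a)*(1/(t+a) - 1/(t+p))) (at t)"
      unfolding UA_def using t a_pos assms(5) a_lt
      by (auto intro!: derivative_eq_intros simp: add_pos_pos less_imp_neq[symmetric])
    moreover have "K/(p-a)*(1/(t+a) - 1/(t+p)) = Uf t"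
    proof -
      have "p - a \<noteq> 0" using a_lt by simp
      moreover have "1/(t+a) - 1/(t+p) = (p-a)/((t+a)*(t+p))"
        using fd[of "t+a" "t+p"] t a_pos assms(5) by simp
      ultimately show ?thesis unfolding Uf_def by simp
    qed
    ultimately show "(UA has_real_derivative Uf t) (at t)" by simp
  next
    have "((\<lambda>t. ln(t+a) - ln(t+p)) \<longlongrightarrow> 0) at_top" by real_asymp
    from tendsto_mult_left[OF this, of "K/(p-a)"]
    show "(UA \<longlongrightarrow> 0) at_top" unfolding UA_def by simp
  qed
  define Lf where "Lf = (\<lambda>t. g/(r*p*(t+g)*(t+p)))"
  have LI: "\<exists>IL. (Lf has_integral IL) {0..} \<and> IL \<ge> g*Lg/((p-g)*r*p)"
  proof (cases "g = 0")
    case True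
    then have "Lf = (\<lambda>_. 0)" by (simp add: Lf_def)
    then show ?thesis using True by (intro exI[of _ 0]) auto
  next
    case False
    then have gp: "g > 0" using g0 by simp
    define LA where "LA = (\<lambda>t. g/(r*p*(p-g))*(ln(t+g) - ln(t+p)))"
    have "(Lf has_integral (0 - LA 0)) {0..}"
    proof (rule ftc_inf)
      fix d :: real
      show "continuous_on {0..d} LA" unfolding LA_def
        using gp assms(5)
        by (intro continuous_intros) (auto simp: add_pos_nonneg less_imp_neq[symmetric])
    next
      fix t :: real assume t: "t > 0"
      have "(LA has_real_derivative g/(r*p*(p-g))*(1/(t+g) - 1/(t+p))) (at t)"
        unfolding LA_def using t gp assms(5) a_lt g_le r_pos
        by (auto intro!: derivative_eq_intros simp: add_pos_pos less_imp_neq[symmetric] mult_ac)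
      moreover have "g/(r*p*(p-g))*(1/(t+g) - 1/(t+p)) = Lf t"
      proof -
        have "p - g \<noteq> 0" using a_lt g_le by simp
        moreover have "1/(t+g) - 1/(t+p) = (p-g)/((t+g)*(t+p))"
          using fd[of "t+g" "t+p"] t gp assms(5) by simp
        ultimately show ?thesis unfolding Lf_def by simp
      qed
      ultimately show "(LA has_real_derivative Lf t) (at t)" by simp
    next
      have "((\<lambda>t. ln(t+g) - ln(t+p)) \<longlongrightarrow> 0) at_top" by real_asymp
      from tendsto_mult_left[OF this, of "g/(r*p*(p-g))"]
      show "(LA \<longlongrightarrow> 0) at_top" unfolding LA_def by simp
    qed
    moreover have "0 - LA 0 \<ge> g*Lg/((p-g)*r*p)"
    proof -
      have "0 - LA 0 = g/(r*p*(p-g)) * (ln p - ln g)" unfolding LA_def by (simp add: right_diff_distrib)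
      moreover have "ln p - ln g \<ge> Lg"
      proof -
        have "Lg = ln (2*p) - ln (a+g)" unfolding Lg_def using ag_pos assms(5) by (simp add: ln_div)
        also have "\<dots> = ln 2 + ln p - ln (a+g)" using assms(5) by (simp add: ln_mult)
        also have "ln (a+g) \<ge> ln (2*g)" using gp g_le by simp
        then have "ln 2 + ln p - ln (a+g) \<le> ln p - ln g" using gp by (simp add: ln_mult)
        finally show ?thesis .
      qed
      moreover have "g/(r*p*(p-g)) \<ge> 0" using gp g_le a_lt r_pos assms(5) by simp
      ultimately have "0 - LA 0 \<ge> g/(r*p*(p-g)) * Lg" by (metis mult_left_mono)
      then show ?thesis by (simp add: mult.commute mult.left_commute)
    qed
    ultimately show ?thesis by blast
  qed
  define m where "m = min z p"
  have m_pos: "m > 0" using assms by (simp add: m_def)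
  define Bf where "Bf = (\<lambda>t. 1/((t+m) * sqrt(t+m)))"
  define BA where "BA = (\<lambda>t::real. -2/sqrt(t+m))"
  have BI: "(Bf has_integral (0 - BA 0)) {0..}"
  proof (rule ftc_inf)
    fix d :: real
    show "continuous_on {0..d} BA" unfolding BA_def
      using m_pos by (intro continuous_intros) (auto simp: add_pos_nonneg less_imp_neq[symmetric])
  next
    fix t :: real assume t: "t > 0"
    have w: "sqrt (t+m) > 0" using t m_pos by simp
    have "(BA has_real_derivative -(-2 * (inverse (sqrt (t+m)) / 2) / (sqrt (t+m) * sqrt (t+m)))) (at t)"
      unfolding BA_def using t m_pos w
      by (auto intro!: derivative_eq_intros simp: add_pos_pos less_imp_neq[symmetric] power2_eq_square)
    moreover have "-(-2 * (inverse (sqrt (t+m)) / 2) / (sqrt (t+m) * sqrt (t+m))) = Bf t"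
      unfolding Bf_def using w t m_pos by (simp add: field_simps)
    ultimately show "(BA has_real_derivative Bf t) (at t)" by simp
  next
    show "(BA \<longlongrightarrow> 0) at_top" unfolding BA_def by real_asymp
  qed
  have phi_cont: "continuous_on {0..} phi" unfolding phi_def
    using assms(4,5) by (intro continuous_intros) (auto simp: add_pos_nonneg less_imp_neq[symmetric])
  have phi_nn: "phi t \<ge> 0" if "t \<ge> 0" for t
    unfolding phi_def using that assms by simp
  have leb0: "{0::real..} \<in> sets lebesgue" by simp
  have leb1: "{0::real<..} \<in> sets lebesgue" by simp
  have phi_int: "phi integrable_on {0..}"
  proof (rule measurable_bounded_by_integrable_imp_integrable_real[where g=Bf])
    show "phi \<in> borel_measurable (lebesgue_on {0..})"
      by (rule continuous_imp_measurable_on_sets_lebesgue[OF phi_cont leb0])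
    show "Bf integrable_on {0..}" using BI by blast
    show "{0::real..} \<in> sets lebesgue" by (rule leb0)
    fix t :: real assume "t \<in> {0..}"
    then have t: "t \<ge> 0" by simp
    have "sqrt (t+m) * (t+m) \<le> sqrt (t+z) * (t+p)"
      using t m_pos by (intro mult_mono) (auto simp: m_def)
    moreover have "(t+m) * sqrt(t+m) > 0" "(t+p) * sqrt(t+z) > 0" using t m_pos assms by auto
    ultimately have "phi t \<le> Bf t" unfolding phi_def Bf_def
      by (intro divide_left_mono) (auto simp: mult.commute)
    then show "\<bar>phi t\<bar> \<le> Bf t" using phi_nn[OF t] by simp
  qed
  define Iphi where "Iphi = integral {0..} phi"
  have C_cont: "continuous_on {0<..} C" unfolding C_def S_def phi_def c0_def
    using assms(1,2,4,5) Spos r_pos unfolding S_def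
    by (intro continuous_intros) (auto simp: add_pos_nonneg less_imp_neq[symmetric])
  have Cbounds: "Lf t < C t \<and> C t < Uf t \<and> 0 \<le> Lf t" if t: "t > 0" for t
  proof -
    define al where "al = 1/t - 1/S t"
    define be where "be = c0 - phi t"
    define alU where "alU = 1/t - 1/(t+a)"
    define beU where "beU = (1/r)*(t/(t+p))*(1/p + 1/(2*z))"
    define alL where "alL = 1/t - 1/(t+g)"
    define beL where "beL = (1/r)*(1/p - 1/(t+p))"
    have St: "S t \<ge> t + g" "S t \<le> t + a" "S t > t" using Sge Sle Sgt t unfolding S_def by auto
    have wz: "sqrt (t+z) > r" using t assms(4) by (simp add: r_def)
    have al_pos: "al > 0" unfolding al_def using St t by (simp add: frac_less2)
    have al_le: "al \<le> alU" unfolding al_def alU_def using St t a_pos by (simp add: frac_le)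
    have al_ge: "al \<ge> alL" unfolding al_def alL_def using St t g0 by (simp add: frac_le)
    have alL0: "alL \<ge> 0" unfolding alL_def using t g0 by (simp add: frac_le)
    have alU0: "alU > 0" unfolding alU_def using t a_pos by (simp add: frac_less2)
    have be_lt: "be < beU" unfolding be_def beU_def c0_def phi_def
      using upper_pt[of "sqrt (t+z)" r t p z] t assms(4,5) r_pos rr by simp
    have be_gt: "be > beL" unfolding be_def beL_def c0_def phi_def
    proof -
      have "1/(sqrt (t+z) * (t+p)) < 1/(r*(t+p))"
        using wz r_pos t assms(4,5) by (intro divide_strict_left_mono) (auto intro!: mult_pos_pos)
      then show "1/(r*p) - 1/(sqrt (t+z) * (t+p)) > (1/r)*(1/p - 1/(t+p))"
        by (simp add: right_diff_distrib)
    qed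
    have beL0: "beL \<ge> 0" unfolding beL_def using t assms(5) r_pos by (simp add: frac_le)
    have Ceq: "C t = al * be" unfolding C_def al_def be_def ..
    have Ueq: "Uf t = alU * beU"
    proof -
      have "alU = a/(t*(t+a))" unfolding alU_def using fd[of t "t+a"] t a_pos by simp
      moreover have gen: "(a/(t*A)) * ((1/r)*(t/P)*(1/p + 1/(2*z))) = a*(1/p + 1/(2*z))/r/(A*P)"
        if "A > 0" "P > 0" for A P
        using that t r_pos by (simp add: field_simps)
      ultimately show ?thesis unfolding Uf_def beU_def K_def using gen[of "t+a" "t+p"] t a_pos assms(5)
        by simp
    qed
    have Leq: "Lf t = alL * beL"
    proof -
      have "alL = g/(t*(t+g))" unfolding alL_def using fd[of t "t+g"] t g0 by simp
      moreover have "beL = t/(r*(p*(t+p)))" unfolding beL_def using fd[of p "t+p"] t assms(5) r_pos by simp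
      moreover have gen: "(g/(t*G)) * (t/(r*(p*P))) = g/(r*p*G*P)"
        if "G > 0" "P > 0" for G P
        using that t r_pos assms(5) by (simp add: field_simps)
      ultimately show ?thesis unfolding Lf_def using gen[of "t+g" "t+p"] t g0 assms(5)
        by simp
    qed
    have "al * be \<le> alU * be" using al_le be_gt beL0 by (intro mult_right_mono) auto
    also have "\<dots> < alU * beU" using alU0 be_lt by simp
    finally have up: "C t < Uf t" using Ceq Ueq by simp
    have "alL * beL \<le> al * beL" using al_ge beL0 by (intro mult_right_mono) auto
    also have "\<dots> < al * be" using al_pos be_gt by simp
    finally have lo: "Lf t < C t" using Ceq Leq by simp
    show ?thesis using up lo Leq alL0 beL0 by simp
  qed
  have UI': "(Uf has_integral (0 - UA 0)) {0<..}" using UI spike0 by blast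
  have C_int: "C integrable_on {0<..}"
  proof (rule measurable_bounded_by_integrable_imp_integrable_real[where g=Uf])
    show "C \<in> borel_measurable (lebesgue_on {0<..})"
      by (rule continuous_imp_measurable_on_sets_lebesgue[OF C_cont leb1])
    show "Uf integrable_on {0<..}" using UI' by blast
    show "{0::real<..} \<in> sets lebesgue" by (rule leb1)
    fix t :: real assume "t \<in> {0<..}"
    then have t: "t > 0" by simp
    then show "\<bar>C t\<bar> \<le> Uf t" using Cbounds[OF t] by simp
  qed
  define E where "E = integral {0<..} C"
  have CI': "(C has_integral E) {0<..}" using C_int unfolding E_def by (rule integrable_integral)
  have CI: "(C has_integral E) {0..}" using CI' spike0 by blast
  have E_up: "E < 0 - UA 0"
  proof -
    have "0 < (0 - UA 0) - E"
    proof (rule pos_int)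
      show "((\<lambda>t. Uf t - C t) has_integral (0 - UA 0) - E) {0<..}"
        by (rule has_integral_diff[OF UI' CI'])
      show "Uf t - C t > 0" if "t > 0" for t using Cbounds[OF that] by simp
      have "continuous_on {1..2} Uf" unfolding Uf_def using a_pos assms(5)
        by (intro continuous_intros) (auto simp: add_pos_nonneg less_imp_neq[symmetric])
      moreover have "continuous_on {1..2} C" using C_cont by (rule continuous_on_subset) auto
      ultimately show "continuous_on {1..2} (\<lambda>t. Uf t - C t)" by (intro continuous_intros)
    qed
    then show ?thesis by simp
  qed
  obtain IL where IL: "(Lf has_integral IL) {0..}" "IL \<ge> g*Lg/((p-g)*r*p)" using LI by blast
  have E_lo: "E > IL"
  proof -
    have IL': "(Lf has_integral IL) {0<..}" using IL(1) spike0 by blast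
    have "0 < E - IL"
    proof (rule pos_int)
      show "((\<lambda>t. C t - Lf t) has_integral E - IL) {0<..}"
        by (rule has_integral_diff[OF CI' IL'])
      show "C t - Lf t > 0" if "t > 0" for t using Cbounds[OF that] by simp
      have "continuous_on {1..2} Lf" unfolding Lf_def using g0 assms(5) r_pos
        by (intro continuous_intros) (auto simp: add_pos_nonneg less_imp_neq[symmetric])
      moreover have "continuous_on {1..2} C" using C_cont by (rule continuous_on_subset) auto
      ultimately show "continuous_on {1..2} (\<lambda>t. C t - Lf t)" by (intro continuous_intros)
    qed
    then show ?thesis by simp
  qed
  define psi where "psi = (\<lambda>t::real. 1 / (sqrt (t + 1) * (t + p/z)))"
  define Phi where "Phi = (\<lambda>u. integral {0..u} phi)"
  define FR where "FR = (\<lambda>t. r * Phi (z*t))"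
  have psiI: "(psi has_integral (r*Iphi - FR 0)) {0..}"
  proof (rule ftc_inf)
    fix d :: real assume d: "d \<ge> 0"
    have "continuous_on {0..z*d} Phi" unfolding Phi_def
      by (rule indefinite_integral_continuous_1, rule integrable_continuous_interval,
          rule continuous_on_subset[OF phi_cont]) auto
    then have "continuous_on {0..d} (\<lambda>t. Phi (z*t))"
      by (rule continuous_on_compose2) (auto intro!: continuous_intros mult_left_mono simp: assms(4) less_imp_le)
    then show "continuous_on {0..d} FR" unfolding FR_def by (intro continuous_intros)
  next
    fix t :: real assume t: "t > 0"
    define u where "u = z*t"
    have u: "u > 0" using t assms(4) by (simp add: u_def)
    have "(Phi has_real_derivative phi u) (at u within {0..u+1})" unfolding Phi_def
      by (rule integral_has_real_derivative, rule continuous_on_subset[OF phi_cont]) (use u in auto)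
    moreover have "at u within {0..u+1} = at u" by (rule at_within_interior) (use u in simp)
    ultimately have dPhi: "(Phi has_real_derivative phi u) (at u)" by simp
    have "((\<lambda>t. Phi (z*t)) has_real_derivative phi (z*t) * z) (at t)"
      by (rule DERIV_chain2) (use dPhi in \<open>auto simp: u_def intro!: derivative_eq_intros\<close>)
    then have "(FR has_real_derivative r * (phi (z*t) * z)) (at t)" unfolding FR_def by (rule DERIV_cmult)
    moreover have "r * (phi (z*t) * z) = psi t"
    proof -
      have "sqrt (z*t + z) = r * sqrt (t+1)" unfolding r_def
        by (metis real_sqrt_mult distrib_left mult.right_neutral)
      moreover have "z*t + p = z * (t + p/z)" using assms(4) by (simp add: field_simps)
      ultimately have "phi (z*t) = 1/((r * sqrt(t+1)) * (z * (t+p/z)))" unfolding phi_def by simp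
      moreover have gen: "r * (1/((r * Y) * (z * X)) * z) = 1/(Y * X)" if "Y > 0" "X > 0" for X Y
        using that r_pos assms(4) by (simp add: field_simps)
      moreover have "sqrt (t+1) > 0" "t + p/z > 0" using t assms(4,5) by (auto intro: add_pos_pos)
      ultimately show ?thesis unfolding psi_def by simp
    qed
    ultimately show "(FR has_real_derivative psi t) (at t)" by simp
  next
    have "(Phi \<longlongrightarrow> Iphi) at_top" unfolding Phi_def Iphi_def by (rule tail_lim[OF phi_int])
    moreover have "filterlim (\<lambda>t. z*t) at_top at_top" using assms(4) by real_asymp
    ultimately have "((\<lambda>t. Phi (z*t)) \<longlongrightarrow> Iphi) at_top" by (rule filterlim_compose)
    then show "(FR \<longlongrightarrow> r*Iphi) at_top" unfolding FR_def by (rule tendsto_mult_left)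
  qed
  have FR0: "FR 0 = 0" unfolding FR_def Phi_def by simp
  have RC: "R_C 1 (p/z) = r*Iphi/2"
    unfolding R_C_def using integral_unique[OF psiI] FR0 by (simp add: psi_def)
  define D where "D = E + (c0*(2*ln 2) - QA 0) - Iphi/p - (0 - V 0)/p"
  have f1I: "(f1 has_integral D) {0..}"
  proof -
    have phiI: "(phi has_integral Iphi) {0..}" using phi_int unfolding Iphi_def by (rule integrable_integral)
    have "((\<lambda>t. C t + Q t - phi t / p - W t / p) has_integral D) {0..}"
      unfolding D_def
      by (intro has_integral_diff has_integral_add has_integral_divide CI QI phiI WI)
    then show ?thesis
    proof (rule has_integral_spike[OF negligible_sing[of 0], rotated])
      fix t assume "t \<in> {0::real..} - {0}"
      then have t: "t > 0" by auto
      show "f1 t = C t + Q t - phi t / p - W t / p" using ident_t[OF t] by simp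
    qed
  qed
  have RJ: "R_J x y z p = 3/2 * D" unfolding R_J_def using integral_unique[OF f1I] by (simp add: f1_def)
  have QA0: "QA 0 = c0*(2*ln(sqrt x + sqrt y) - ln a)" by (simp add: QA_def)
  have V0: "(0 - V 0)/p = - c0*(2*ln(2*r) - ln a)"
    unfolding V_def c0_def by (simp add: r_def mult_2[symmetric])
  have L8: "ln(8*z/(a+g)) = 2*ln 2 + 2*ln(2*r) - 2*ln(sqrt x + sqrt y)"
  proof -
    have "8*z/(a+g) = (2*(2*r))^2/(sqrt x + sqrt y)^2"
      unfolding sq2 using ag_pos by (simp add: power2_eq_square field_simps rr[symmetric])
    also have "ln \<dots> = ln ((2*(2*r))^2) - ln ((sqrt x + sqrt y)^2)"
      using r_pos sqxy by (intro ln_divide_pos) auto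
    also have "\<dots> = 2*ln(2*(2*r)) - 2*ln(sqrt x + sqrt y)" unfolding ln_realpow by simp
    also have "\<dots> = 2*(ln 2 + ln (2*r)) - 2*ln(sqrt x + sqrt y)" using r_pos by (subst ln_mult_pos) auto
    finally show ?thesis by simp
  qed
  have Dform: "D = E - Iphi/p + c0*ln(8*z/(a+g))"
    unfolding D_def V0 QA0 L8 by (simp add: algebra_simps)
  have Lg_pos': "Lg > 0" using Lg_pos by (simp add: Lg_def)
  define th where "th = E*r*p^2/Lg"
  have pg: "p - g > 0" "p - a > 0" using g_le a_lt by auto
  have genq: "G/(1 - G/P) = (G*L/(d*R*P))*(R*P^2/L)" if "d > 0" "P > 0" "R > 0" "L > 0" "d = P - G" for G P R L d :: real
  proof -
    have "1 - G/P = d/P" using that by (simp add: field_simps)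
    then show ?thesis using that by (simp add: field_simps power2_eq_square)
  qed
  have lower: "g/(1 - g/p) < th"
  proof -
    have "g/(1 - g/p) = (g*Lg/((p-g)*r*p))*(r*p^2/Lg)"
      using genq[of "p-g" p r Lg g] pg r_pos assms(5) Lg_pos' by simp
    also have "\<dots> < E*(r*p^2/Lg)"
      using IL(2) E_lo r_pos assms(5) Lg_pos' by (intro mult_strict_right_mono) auto
    also have "\<dots> = th" by (simp add: th_def)
    finally show ?thesis .
  qed
  have upper: "th < a/(1 - a/p)*(1 + p/(2*z))"
  proof -
    have "0 - UA 0 = K/(p-a)*(ln p - ln a)" unfolding UA_def by (simp add: right_diff_distrib)
    also have "\<dots> \<le> K/(p-a)*Lg"
    proof (rule mult_left_mono)
      show "K/(p-a) \<ge> 0" unfolding K_def using a_pos pg r_pos assms by simp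
      have "Lg = ln (2*p) - ln (a+g)" unfolding Lg_def using ag_pos assms(5) by (simp add: ln_div)
      also have "\<dots> = ln 2 + ln p - ln (a+g)" using assms(5) by (simp add: ln_mult)
      also have "ln (a+g) \<le> ln (2*a)" using ag_pos g_le by simp
      then have "ln p - ln a \<le> ln 2 + ln p - ln (a+g)" using a_pos by (simp add: ln_mult)
      finally show "ln p - ln a \<le> Lg" .
    qed
    finally have EK: "E < K/(p-a)*Lg" using E_up by simp
    have "th = E*(r*p^2/Lg)" by (simp add: th_def)
    also have "\<dots> < (K/(p-a)*Lg)*(r*p^2/Lg)"
      using EK r_pos assms(5) Lg_pos' by (intro mult_strict_right_mono) auto
    also have "(K/(p-a)*Lg)*(r*p^2/Lg) = a/(1 - a/p)*(1 + p/(2*z))"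
    proof -
      have "1 - a/p = (p-a)/p" using assms(5) by (simp add: field_simps)
      moreover have "(K/d*Lg)*(r*p^2/Lg) = a/(d/p)*(1 + p/(2*z))" if "d > 0" for d
        unfolding K_def using that r_pos assms(4,5) Lg_pos' by (simp add: field_simps power2_eq_square)
      ultimately show ?thesis using pg by simp
    qed
    finally show ?thesis .
  qed
  have eqn: "R_J x y z p = 3 / (2 * r * p) * (ln (8 * z / (a + g)) - 2 * R_C 1 (p / z) + th / p * Lg)"
  proof -
    have "th / p * Lg = E*r*p" unfolding th_def using Lg_pos' assms(5) by (simp add: field_simps power2_eq_square)
    then show ?thesis unfolding RJ Dform RC c0_def using r_pos assms(5) by (simp add: field_simps)
  qed
  have fold: "sqrt (x*y) = g" "(x+y)/2 = a" "sqrt z = r" by (simp_all add: g_def a_def r_def)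
  show ?thesis unfolding fold
    using lower upper eqn unfolding Lg_def by blast
qed
end
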